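(* For $0\le v\le 1$ and $a,b>0$, $$H(a,b)\le G\left(H_v(a,b),H_{1-v}(a,b)\right)\le G(a,b)$$ and $$H(a,b)\le H\left(G_v(a,b),G_{1-v}(a,b)\right)\le G(a,b).$$
   Context: For $x,y>0$ and $0\le v\le 1$: $G(x,y):=\sqrt{xy}$, $G_v(x,y):=x^{1-v}y^v$, the weighted harmonic mean $H_v(x,y):=\left\{(1-v)x^{-1}+vy^{-1}\right\}^{-1}$, and $H(x,y):=H_{1/2}(x,y)=\frac{2xy}{x+y}$. *)

theory Defs
  imports Complex_Main
begin

definition gmean :: "real \<Rightarrow> real \<Rightarrow> real" where
  "gmean x y = sqrt (x * y)"

definition wgmean :: "real \<Rightarrow> real \<Rightarrow> real \<Rightarrow> real" where
  "wgmean v x y = x powr (1 - v) * y powr v"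

definition whmean :: "real \<Rightarrow> real \<Rightarrow> real \<Rightarrow> real" where
  "whmean v x y = inverse ((1 - v) * inverse x + v * inverse y)"

definition hmean :: "real \<Rightarrow> real \<Rightarrow> real" where
  "hmean x y = 2 * x * y / (x + y)"

end

theory Submission
  imports Defs
begin

theorem proposition2p9:
  fixes a b v :: real
  assumes "0 \<le> v" and "v \<le> 1" and "0 < a" and "0 < b"
  shows "hmean a b \<le> gmean (whmean v a b) (whmean (1 - v) a b)
         \<and> gmean (whmean v a b) (whmean (1 - v) a b) \<le> gmean a b
         \<and> hmean a b \<le> hmean (wgmean v a b) (wgmean (1 - v) a b)
         \<and> hmean (wgmean v a b) (wgmean (1 - v) a b) \<le> gmean a b"
proof -
  note a = assms
  define p where "p = inverse a"
  define q where "q = inverse b"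
  have p: "p > 0" and q: "q > 0" using a by (auto simp: p_def q_def)
  define A where "A = (1 - v) * p + v * q"
  define B where "B = v * p + (1 - v) * q"
  have A: "A > 0"
  proof (cases "v = 0")
    case True then show ?thesis using p unfolding A_def by simp
  next
    case False
    then have "v * q > 0" using a q by simp
    moreover have "(1 - v) * p \<ge> 0" using a p by simp
    ultimately show ?thesis unfolding A_def by linarith
  qed
  have B: "B > 0"
  proof (cases "v = 0")
    case True then show ?thesis using q unfolding B_def by simp
  next
    case False
    then have "v * p > 0" using a p by simp
    moreover have "(1 - v) * q \<ge> 0" using a q by simp
    ultimately show ?thesis unfolding B_def by linarith
  qed
  have AB: "A * B = p * q + v * (1 - v) * (p - q)^2"
    unfolding A_def B_def by (simp add: algebra_simps power2_eq_square)
  have vv: "v * (1 - v) \<ge> 0" using a by simp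
  have vv2: "v * (1 - v) \<le> 1/4"
  proof -
    have "0 \<le> (v - 1/2)^2" by simp
    thus ?thesis by (simp add: algebra_simps power2_eq_square)
  qed
  have lo: "p * q \<le> A * B" unfolding AB using vv by simp
  have hi: "A * B \<le> ((p + q)/2)^2"
  proof -
    have "v * (1 - v) * (p - q)^2 \<le> 1/4 * (p - q)^2"
      by (rule mult_right_mono[OF vv2]) simp
    thus ?thesis unfolding AB by (simp add: algebra_simps power2_eq_square)
  qed
  have g1: "gmean (whmean v a b) (whmean (1 - v) a b) = inverse (sqrt (A * B))"
    unfolding gmean_def whmean_def A_def B_def p_def q_def
    by (simp add: real_sqrt_inverse[symmetric] mult.commute)
  have h1: "hmean a b = inverse ((p + q) / 2)"
    using a unfolding hmean_def p_def q_def by (simp add: field_simps)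
  have ga: "gmean a b = inverse (sqrt (p * q))"
    using a unfolding gmean_def p_def q_def
    by (simp add: real_sqrt_inverse[symmetric] real_sqrt_mult)
  have s1: "sqrt (A * B) \<le> (p + q) / 2"
  proof -
    have "sqrt (A * B) \<le> sqrt (((p + q)/2)^2)" using hi by (rule real_sqrt_le_mono)
    also have "\<dots> = (p + q) / 2" using p q by simp
    finally show ?thesis .
  qed
  have s2: "sqrt (p * q) \<le> sqrt (A * B)" using lo by simp
  have sAB: "sqrt (A * B) > 0" using A B by simp
  have spq: "sqrt (p * q) > 0" using p q by simp
  have P1: "hmean a b \<le> gmean (whmean v a b) (whmean (1 - v) a b)"
    unfolding h1 g1 using s1 sAB by (rule le_imp_inverse_le)
  have P2: "gmean (whmean v a b) (whmean (1 - v) a b) \<le> gmean a b"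
    unfolding ga g1 using s2 spq by (rule le_imp_inverse_le)
  define x where "x = a powr (1 - v) * b powr v"
  define y where "y = a powr v * b powr (1 - v)"
  have x: "x > 0" and y: "y > 0" using a by (auto simp: x_def y_def)
  have xy: "x * y = a * b"
  proof -
    have "x * y = (a powr (1 - v) * a powr v) * (b powr v * b powr (1 - v))"
      unfolding x_def y_def by (simp add: algebra_simps)
    also have "\<dots> = a * b" using a by (simp add: powr_add[symmetric])
    finally show ?thesis .
  qed
  have w: "wgmean v a b = x" "wgmean (1 - v) a b = y"
    unfolding wgmean_def x_def y_def by (auto simp: mult.commute)
  have sum_hi: "x + y \<le> a + b"
  proof -
    have e: "a + b - (x + y) = (a powr (1 - v) - b powr (1 - v)) * (a powr v - b powr v)"
    proof -
      have "a = a powr (1 - v) * a powr v" "b = b powr (1 - v) * b powr v"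
        using a by (simp_all add: powr_add[symmetric])
      then show ?thesis unfolding x_def y_def by (simp add: algebra_simps)
    qed
    have "0 \<le> (a powr (1 - v) - b powr (1 - v)) * (a powr v - b powr v)"
    proof (cases "a \<le> b")
      case True
      then have "a powr (1 - v) \<le> b powr (1 - v)" "a powr v \<le> b powr v"
        using a by (auto intro!: powr_mono2)
      then show ?thesis by (simp add: mult_nonpos_nonpos)
    next
      case False
      then have "b powr (1 - v) \<le> a powr (1 - v)" "b powr v \<le> a powr v"
        using a by (auto intro!: powr_mono2)
      then show ?thesis by simp
    qed
    then show ?thesis using e by linarith
  qed
  have sum_lo: "2 * sqrt (a * b) \<le> x + y"
  proof -
    have "0 \<le> (sqrt x - sqrt y)^2" by simp
    hence "2 * sqrt x * sqrt y \<le> x + y" using x y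
      by (simp add: power2_eq_square algebra_simps)
    moreover have "sqrt x * sqrt y = sqrt (a * b)" using xy by (simp add: real_sqrt_mult[symmetric])
    ultimately show ?thesis by (simp add: mult.assoc)
  qed
  have sab: "sqrt (a * b) > 0" using a by simp
  have sq: "sqrt (a * b) * sqrt (a * b) = a * b" using a by simp
  have P3: "hmean a b \<le> hmean x y"
    unfolding hmean_def using a x y sum_hi
    by (simp add: xy divide_simps mult.assoc mult_left_mono)
  have P4: "hmean x y \<le> gmean a b"
  proof -
    have "hmean x y = 2 * (a * b) / (x + y)" unfolding hmean_def using xy by (simp add: mult.assoc)
    also have "\<dots> \<le> 2 * (a * b) / (2 * sqrt (a * b))"
      using sum_lo sab a x y by (intro divide_left_mono) auto
    also have "\<dots> = (sqrt (a * b) * sqrt (a * b)) / sqrt (a * b)" unfolding sq by simp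
    also have "\<dots> = sqrt (a * b)" using sab by (metis nonzero_mult_div_cancel_left less_irrefl)
    finally show ?thesis unfolding gmean_def .
  qed
  show ?thesis using P1 P2 P3 P4 w by simp
qed

end
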